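(* Let $r\ge3$ and $q\ge4$, and let $K^{2,q}(K_r)$ be the graph obtained from the complete graph $K_r$ by deleting each edge $uv$ and adding $q$ new vertices each adjacent to exactly $u$ and $v$. Then $\gamma_P(K^{2,q}(K_r))=r-1$, $\overline{\gamma_P}(K^{2,q}(K_r))\ge q\frac{r(r-1)}{2}-(r-1)$, $\underline{pd_0}(K^{2,q}(K_r))=r$, and $pd_0(K^{2,q}(K_r))\ge q\frac{r(r-1)}{2}-(r-1)+1>r$.
   Context: All graphs are finite, simple, undirected. Standard color change rule: with a set $B$ of blue vertices and $W=V(G)\setminus B$ white, a blue vertex $u$ may color a white vertex $w$ blue if $N(u)\cap W=\{w\}$. $S$ is a standard zero forcing set if, starting with exactly $S$ blue and applying the rule until no change is possible, all vertices become blue. $S\subseteq V(G)$ is a power dominating set if $N[S]$ (closed neighborhood) is a standard zero forcing set. $\gamma_P(G)$ is the minimum cardinality of a power dominating set and $\overline{\gamma_P}(G)$ the maximum cardinality of an inclusion-minimal power dominating set. The power domination TAR graph $\mathfrak{P}(G)$ has as vertices the power dominating sets, with $S_1S_2$ an edge iff $|S_1\ominus S_2|=1$; $\mathfrak{P}_k(G)$ is its subgraph induced by power dominating sets of size at most $k$. $pd_0(G)$ is the least $k_0$ with $\mathfrak{P}_k(G)$ connected for all $k\ge k_0$, and $\underline{pd_0}(G)$ is the least $k$ with $\mathfrak{P}_k(G)$ connected. *)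

theory Defs
  imports Main
begin

text \<open>A finite simple graph is given by a vertex set V and an adjacency
relation E (assumed symmetric and irreflexive on V where relevant).\<close>

definition open_nbhd :: "'a set \<Rightarrow> ('a \<Rightarrow> 'a \<Rightarrow> bool) \<Rightarrow> 'a \<Rightarrow> 'a set" where
  "open_nbhd V E u = {x \<in> V. E u x}"

definition closed_nbhd_set :: "'a set \<Rightarrow> ('a \<Rightarrow> 'a \<Rightarrow> bool) \<Rightarrow> 'a set \<Rightarrow> 'a set" where
  "closed_nbhd_set V E S = S \<union> {v \<in> V. \<exists>u\<in>S. E u v}"

definition force_step :: "'a set \<Rightarrow> ('a \<Rightarrow> 'a \<Rightarrow> bool) \<Rightarrow> 'a set \<Rightarrow> 'a set \<Rightarrow> bool" where
  "force_step V E B B' \<longleftrightarrow>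
     (\<exists>u\<in>B. \<exists>w. open_nbhd V E u - B = {w} \<and> B' = insert w B)"

definition zero_forcing_set :: "'a set \<Rightarrow> ('a \<Rightarrow> 'a \<Rightarrow> bool) \<Rightarrow> 'a set \<Rightarrow> bool" where
  "zero_forcing_set V E S \<longleftrightarrow> S \<subseteq> V \<and> (force_step V E)\<^sup>*\<^sup>* S V"

definition power_dominating_set :: "'a set \<Rightarrow> ('a \<Rightarrow> 'a \<Rightarrow> bool) \<Rightarrow> 'a set \<Rightarrow> bool" where
  "power_dominating_set V E S \<longleftrightarrow> S \<subseteq> V \<and> zero_forcing_set V E (closed_nbhd_set V E S)"

definition power_domination_number :: "'a set \<Rightarrow> ('a \<Rightarrow> 'a \<Rightarrow> bool) \<Rightarrow> nat" where
  "power_domination_number V E = Min (card ` {S. power_dominating_set V E S})"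

definition minimal_pds :: "'a set \<Rightarrow> ('a \<Rightarrow> 'a \<Rightarrow> bool) \<Rightarrow> 'a set \<Rightarrow> bool" where
  "minimal_pds V E S \<longleftrightarrow> power_dominating_set V E S \<and>
     (\<forall>T. T \<subset> S \<longrightarrow> \<not> power_dominating_set V E T)"

definition upper_power_domination_number :: "'a set \<Rightarrow> ('a \<Rightarrow> 'a \<Rightarrow> bool) \<Rightarrow> nat" where
  "upper_power_domination_number V E = Max (card ` {S. minimal_pds V E S})"

text \<open>Vertex set of the truncated TAR graph P_k(G): power dominating sets of size at most k.
Two such sets are adjacent iff their symmetric difference has exactly one element.\<close>
definition tar_vertices :: "'a set \<Rightarrow> ('a \<Rightarrow> 'a \<Rightarrow> bool) \<Rightarrow> nat \<Rightarrow> 'a set set" where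
  "tar_vertices V E k = {S. power_dominating_set V E S \<and> card S \<le> k}"

definition tar_adj :: "'a set \<Rightarrow> 'a set \<Rightarrow> bool" where
  "tar_adj S1 S2 \<longleftrightarrow> card ((S1 - S2) \<union> (S2 - S1)) = 1"

definition connected_on :: "'b set \<Rightarrow> ('b \<Rightarrow> 'b \<Rightarrow> bool) \<Rightarrow> bool" where
  "connected_on X R \<longleftrightarrow> X \<noteq> {} \<and>
     (\<forall>x\<in>X. \<forall>y\<in>X. (\<lambda>a b. a \<in> X \<and> b \<in> X \<and> R a b)\<^sup>*\<^sup>* x y)"

definition tar_connected :: "'a set \<Rightarrow> ('a \<Rightarrow> 'a \<Rightarrow> bool) \<Rightarrow> nat \<Rightarrow> bool" where
  "tar_connected V E k \<longleftrightarrow> connected_on (tar_vertices V E k) tar_adj"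

definition pd0 :: "'a set \<Rightarrow> ('a \<Rightarrow> 'a \<Rightarrow> bool) \<Rightarrow> nat" where
  "pd0 V E = (LEAST k0. \<forall>k\<ge>k0. tar_connected V E k)"

definition lower_pd0 :: "'a set \<Rightarrow> ('a \<Rightarrow> 'a \<Rightarrow> bool) \<Rightarrow> nat" where
  "lower_pd0 V E = (LEAST k. tar_connected V E k)"

text \<open>The graph K^{2,q}(K_r): original vertices Inl i (i < r); for every edge ij (i < j < r)
of K_r, the edge is deleted and q new vertices Inr (i,j,t) (t < q) adjacent exactly to
Inl i and Inl j are added.\<close>
definition kqr_V :: "nat \<Rightarrow> nat \<Rightarrow> (nat + nat \<times> nat \<times> nat) set" where
  "kqr_V r q = Inl ` {..<r} \<union> {Inr (i, j, t) | i j t. i < j \<and> j < r \<and> t < q}"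

definition kqr_E :: "nat \<Rightarrow> nat \<Rightarrow> (nat + nat \<times> nat \<times> nat) \<Rightarrow> (nat + nat \<times> nat \<times> nat) \<Rightarrow> bool" where
  "kqr_E r q x y \<longleftrightarrow>
     (\<exists>i j t. i < j \<and> j < r \<and> t < q \<and>
        ((x = Inr (i, j, t) \<and> (y = Inl i \<or> y = Inl j)) \<or>
         (y = Inr (i, j, t) \<and> (x = Inl i \<or> x = Inl j))))"

end

theory Submission
  imports Defs
begin


lemma open_nbhd_sub: "open_nbhd V E u \<subseteq> V" by (auto simp: open_nbhd_def)

lemma zf_mono:
  assumes "(force_step V E)\<^sup>*\<^sup>* B V" "B \<subseteq> B'" "B' \<subseteq> V"
  shows "(force_step V E)\<^sup>*\<^sup>* B' V"
  using assms
proof (induction arbitrary: B' rule: converse_rtranclp_induct)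
  case base
  then have "B' = V" by auto
  then show ?case by simp
next
  case (step y z)
  from step.hyps(1) obtain u w where u: "u \<in> y" "open_nbhd V E u - y = {w}" "z = insert w y"
    unfolding force_step_def by blast
  show ?case
  proof (cases "w \<in> B'")
    case True
    then have "z \<subseteq> B'" using u step.prems by auto
    then show ?thesis using step.IH step.prems by auto
  next
    case False
    have "open_nbhd V E u - B' = {w}" using u step.prems False by auto
    then have "force_step V E B' (insert w B')" unfolding force_step_def using u step.prems by blast
    moreover have "(force_step V E)\<^sup>*\<^sup>* (insert w B') V"
      apply (rule step.IH) using u step.prems open_nbhd_sub[of V E u] by auto
    ultimately show ?thesis by (rule converse_rtranclp_into_rtranclp)
  qed
qed

lemma zf_all:
  assumes "finite V" "B \<subseteq> V" "\<forall>w\<in>V-B. \<exists>u\<in>B. open_nbhd V E u - B = {w}"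
  shows "(force_step V E)\<^sup>*\<^sup>* B V"
  using assms
proof (induction "card (V - B)" arbitrary: B)
  case 0
  then have "V - B = {}" by simp
  then have "B = V" using 0 by blast
  then show ?case by simp
next
  case (Suc n)
  then have "V - B \<noteq> {}" by (metis card.empty nat.distinct(1))
  then obtain w where w: "w \<in> V" "w \<notin> B" by blast
  then obtain u where u: "u \<in> B" "open_nbhd V E u - B = {w}" using Suc.prems(3) by blast
  have st: "force_step V E B (insert w B)" unfolding force_step_def using u by blast
  have e: "V - insert w B = (V - B) - {w}" by auto
  have "card ((V - B) - {w}) = card (V - B) - 1" using w Suc.prems(1) by (intro card_Diff_singleton) auto
  then have c: "n = card (V - insert w B)" using Suc.hyps(2) e by simp
  have sub: "insert w B \<subseteq> V" using w Suc.prems(2) by blast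
  have all: "\<forall>w'\<in>V - insert w B. \<exists>u\<in>insert w B. open_nbhd V E u - insert w B = {w'}"
  proof
    fix w' assume w': "w' \<in> V - insert w B"
    then obtain u' where u': "u' \<in> B" "open_nbhd V E u' - B = {w'}" using Suc.prems(3) by blast
    have "open_nbhd V E u' - insert w B = {w'}" using u'(2) w' by blast
    then show "\<exists>u\<in>insert w B. open_nbhd V E u - insert w B = {w'}" using u'(1) by blast
  qed
  have "(force_step V E)\<^sup>*\<^sup>* (insert w B) V" using Suc.hyps(1)[OF c Suc.prems(1) sub all] .
  with st show ?case by (rule converse_rtranclp_into_rtranclp)
qed

lemma fort_fail:
  assumes "F \<subseteq> V" "F \<noteq> {}" "B \<inter> F = {}"
    "\<And>u w. u \<notin> F \<Longrightarrow> w \<in> F \<Longrightarrow> E u w \<Longrightarrow> \<exists>w'\<in>F. w' \<noteq> w \<and> E u w'"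
  shows "\<not> (force_step V E)\<^sup>*\<^sup>* B V"
proof
  assume "(force_step V E)\<^sup>*\<^sup>* B V"
  then have "V \<inter> F = {}"
  proof (induction rule: rtranclp_induct)
    case base then show ?case using assms(3) .
  next
    case (step y z)
    from step.hyps(2) obtain u w where u: "u \<in> y" "open_nbhd V E u - y = {w}" "z = insert w y"
      unfolding force_step_def by blast
    have "w \<notin> F"
    proof
      assume wF: "w \<in> F"
      have "u \<notin> F" using u(1) step.IH by auto
      moreover have "E u w" using u(2) by (auto simp: open_nbhd_def)
      ultimately obtain w' where w': "w' \<in> F" "w' \<noteq> w" "E u w'" using assms(4) wF by blast
      then have "w' \<in> open_nbhd V E u - y" using assms(1) step.IH by (auto simp: open_nbhd_def)
      then show False using u(2) w'(2) by auto
    qed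
    then show ?case using step.IH u(3) by auto
  qed
  then show False using assms(1,2) by auto
qed

lemma cn_sub: "S \<subseteq> V \<Longrightarrow> closed_nbhd_set V E S \<subseteq> V"
  by (auto simp: closed_nbhd_set_def)

lemma cn_mono: "S \<subseteq> S' \<Longrightarrow> closed_nbhd_set V E S \<subseteq> closed_nbhd_set V E S'"
  by (auto simp: closed_nbhd_set_def)

lemma pds_mono:
  assumes "power_dominating_set V E S" "S \<subseteq> S'" "S' \<subseteq> V"
  shows "power_dominating_set V E S'"
  using assms zf_mono[of V E "closed_nbhd_set V E S" "closed_nbhd_set V E S'"]
    cn_sub[of S' V E] cn_mono[of S S' V E]
  unfolding power_dominating_set_def zero_forcing_set_def by auto

lemma pds_V: "power_dominating_set V E V"
proof -
  have "closed_nbhd_set V E V = V" by (auto simp: closed_nbhd_set_def)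
  then show ?thesis unfolding power_dominating_set_def zero_forcing_set_def by auto
qed

lemma pds_fort:
  assumes "F \<subseteq> V" "F \<noteq> {}" "closed_nbhd_set V E S \<inter> F = {}"
    "\<And>u w. u \<notin> F \<Longrightarrow> w \<in> F \<Longrightarrow> E u w \<Longrightarrow> \<exists>w'\<in>F. w' \<noteq> w \<and> E u w'"
  shows "\<not> power_dominating_set V E S"
  using fort_fail[OF assms] unfolding power_dominating_set_def zero_forcing_set_def by auto

lemma rt_noadj:
  assumes "(\<lambda>a b. a \<in> X \<and> b \<in> X \<and> R a b)\<^sup>*\<^sup>* x y" "\<forall>a\<in>X. \<forall>b\<in>X. \<not> R a b"
  shows "x = y"
  using assms(1)
proof (induction rule: converse_rtranclp_induct)
  case base then show ?case by (rule refl)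
next
  case (step a b)
  then have "a \<in> X" "b \<in> X" "R a b" by auto
  then show ?case using assms(2) by blast
qed

lemma big_conn:
  assumes "finite V" "card V \<le> k"
  shows "tar_connected V E k"
proof -
  let ?X = "tar_vertices V E k"
  let ?R = "\<lambda>a b. a \<in> ?X \<and> b \<in> ?X \<and> tar_adj a b"
  have pv: "V \<in> ?X" using pds_V assms by (auto simp: tar_vertices_def)
  have main: "?R\<^sup>*\<^sup>* S V \<and> ?R\<^sup>*\<^sup>* V S" if "power_dominating_set V E S" for S
    using that
  proof (induction "card (V - S)" arbitrary: S)
    case 0
    then have "S \<subseteq> V" by (auto simp: power_dominating_set_def)
    moreover have "V - S = {}" using 0 assms(1) by simp
    ultimately have "S = V" by blast
    then show ?case by simp
  next
    case (Suc n)
    then have SV: "S \<subseteq> V" by (auto simp: power_dominating_set_def)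
    have "V - S \<noteq> {}" using Suc.hyps(2) by (metis card.empty nat.distinct(1))
    then obtain y where y: "y \<in> V" "y \<notin> S" by blast
    have p': "power_dominating_set V E (insert y S)" using pds_mono[OF Suc.prems] y SV by auto
    have ih: "?R\<^sup>*\<^sup>* (insert y S) V \<and> ?R\<^sup>*\<^sup>* V (insert y S)"
    proof (rule Suc.hyps(1)[OF _ p'])
      have e: "V - insert y S = (V - S) - {y}" by auto
      have "card ((V - S) - {y}) = card (V - S) - 1" using y assms(1) by (intro card_Diff_singleton) auto
      then show "n = card (V - insert y S)" using Suc.hyps(2) e by simp
    qed
    have cS: "card S \<le> k" using card_mono[OF assms(1) SV] assms(2) by linarith
    have "card (insert y S) \<le> card V" using y SV by (intro card_mono[OF assms(1)]) auto
    then have cS': "card (insert y S) \<le> k" using assms(2) by linarith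
    have sd1: "(S - insert y S) \<union> (insert y S - S) = {y}" using y by auto
    have sd2: "(insert y S - S) \<union> (S - insert y S) = {y}" using y by auto
    have x1: "S \<in> ?X" using Suc.prems cS by (simp add: tar_vertices_def)
    have x2: "insert y S \<in> ?X" using p' cS' by (simp add: tar_vertices_def)
    have r1: "?R S (insert y S)" using x1 x2 sd1 by (simp add: tar_adj_def)
    have r2: "?R (insert y S) S" using x1 x2 sd2 by (simp add: tar_adj_def)
    have a1: "?R\<^sup>*\<^sup>* S V" by (rule converse_rtranclp_into_rtranclp[of ?R, OF r1 conjunct1[OF ih]])
    have a2: "?R\<^sup>*\<^sup>* V S" by (rule rtranclp.rtrancl_into_rtrancl[of ?R, OF conjunct2[OF ih] r2])
    show ?case using a1 a2 by blast
  qed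
  show ?thesis unfolding tar_connected_def connected_on_def
  proof (intro conjI ballI)
    show "?X \<noteq> {}" using pv by blast
    fix x y assume "x \<in> ?X" "y \<in> ?X"
    then have p1: "power_dominating_set V E x" "power_dominating_set V E y" by (simp_all add: tar_vertices_def)
    have "?R\<^sup>*\<^sup>* x V" using conjunct1[OF main[OF p1(1)]] .
    moreover have "?R\<^sup>*\<^sup>* V y" using conjunct2[OF main[OF p1(2)]] .
    ultimately show "?R\<^sup>*\<^sup>* x y" by (rule rtranclp_trans)
  qed
qed

lemma isolated_disconn:
  assumes "finite V" "minimal_pds V E S" "card S = N" "power_dominating_set V E T" "card T \<le> N" "T \<noteq> S"
  shows "\<not> tar_connected V E N"
proof
  assume "tar_connected V E N"
  let ?X = "tar_vertices V E N"
  let ?R = "\<lambda>a b. a \<in> ?X \<and> b \<in> ?X \<and> tar_adj a b"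
  have "S \<in> ?X" "T \<in> ?X" using assms by (auto simp: tar_vertices_def minimal_pds_def)
  then have "?R\<^sup>*\<^sup>* S T" using \<open>tar_connected V E N\<close> by (auto simp: tar_connected_def connected_on_def)
  then obtain z where z: "?R S z"
  proof (cases rule: converse_rtranclpE)
    case base then show ?thesis using assms(6) by simp
  next
    case (step z) then show ?thesis using that by blast
  qed
  have SV: "S \<subseteq> V" using assms(2) by (auto simp: minimal_pds_def power_dominating_set_def)
  have zV: "z \<subseteq> V" using z by (auto simp: tar_vertices_def power_dominating_set_def)
  have fS: "finite S" "finite z" using finite_subset[OF SV assms(1)] finite_subset[OF zV assms(1)] by auto
  from z have "card ((S - z) \<union> (z - S)) = 1" by (auto simp: tar_adj_def)
  then obtain y where y: "(S - z) \<union> (z - S) = {y}" by (meson card_1_singletonE)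
  show False
  proof (cases "y \<in> S")
    case True
    have A: "z - S \<subseteq> {y}" using y by blast
    then have B: "z \<subseteq> S" using True by blast
    have "y \<in> (S - z) \<union> (z - S)" using y by simp
    then have "y \<notin> z" using True by blast
    then have "z \<subset> S" using B True by blast
    moreover have "power_dominating_set V E z" using z by (simp add: tar_vertices_def)
    ultimately show False using assms(2) unfolding minimal_pds_def by blast
  next
    case False
    have A: "S - z \<subseteq> {y}" using y by blast
    then have B: "S \<subseteq> z" using False by blast
    have "z - S \<subseteq> {y}" using y by blast
    moreover have "y \<in> (S - z) \<union> (z - S)" using y by simp
    ultimately have "z - S = {y}" using False by blast
    then have "z = insert y S" using B by blast
    then have "card z = N + 1" using fS False assms(3) by simp
    moreover have "card z \<le> N" using z by (simp add: tar_vertices_def)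
    ultimately show False by simp
  qed
qed




lemma kE_Inr[simp]: "kqr_E r q (Inr (i,j,t)) y \<longleftrightarrow> i<j \<and> j<r \<and> t<q \<and> (y = Inl i \<or> y = Inl j)"
  by (auto simp: kqr_E_def)
lemma kE_toInr[simp]: "kqr_E r q y (Inr (i,j,t)) \<longleftrightarrow> i<j \<and> j<r \<and> t<q \<and> (y = Inl i \<or> y = Inl j)"
  by (auto simp: kqr_E_def)
lemma kE_LL[simp]: "kqr_E r q (Inl a) (Inl b) = False"
  by (auto simp: kqr_E_def)

lemma kV_simps[simp]:
  "Inl a \<in> kqr_V r q \<longleftrightarrow> a<r"
  "Inr (i,j,t) \<in> kqr_V r q \<longleftrightarrow> i<j \<and> j<r \<and> t<q"
  by (auto simp: kqr_V_def)

lemma kV_finite: "finite (kqr_V r q)"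
proof -
  have "kqr_V r q \<subseteq> Inl ` {..<r} \<union> Inr ` ({..<r} \<times> {..<r} \<times> {..<q})"
    by (auto simp: kqr_V_def)
  then show ?thesis by (rule finite_subset) auto
qed

definition AA :: "nat \<Rightarrow> nat \<Rightarrow> (nat + nat \<times> nat \<times> nat) set" where
  "AA r a = Inl ` ({..<r} - {a})"

lemma AA_sub: "AA r a \<subseteq> kqr_V r q" by (auto simp: AA_def)

lemma AA_pds:
  assumes "2 \<le> r" "1 \<le> q" "a < r"
  shows "power_dominating_set (kqr_V r q) (kqr_E r q) (AA r a)"
proof -
  let ?V = "kqr_V r q" and ?E = "kqr_E r q"
  let ?B = "?V - {Inl a}"
  have sub: "?B \<subseteq> closed_nbhd_set ?V ?E (AA r a)"
  proof
    fix x assume x: "x \<in> ?B"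
    show "x \<in> closed_nbhd_set ?V ?E (AA r a)"
    proof (cases x)
      case (Inl c)
      then show ?thesis using x by (auto simp: closed_nbhd_set_def AA_def)
    next
      case (Inr p)
      then obtain i j t where p: "x = Inr (i,j,t)" by (cases p) auto
      then have ijt: "i<j" "j<r" "t<q" using x by auto
      show ?thesis
      proof (cases "i = a")
        case True
        then have "Inl j \<in> AA r a" using ijt by (auto simp: AA_def)
        then show ?thesis using x p ijt unfolding closed_nbhd_set_def by fastforce
      next
        case False
        then have "Inl i \<in> AA r a" using ijt by (auto simp: AA_def)
        then show ?thesis using x p ijt unfolding closed_nbhd_set_def by fastforce
      qed
    qed
  qed
  define b where "b = (if a = 0 then 1 else 0::nat)"
  have b: "b < r" "b \<noteq> a" using assms by (auto simp: b_def)
  let ?u = "Inr (min a b, max a b, 0) :: nat + nat \<times> nat \<times> nat"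
  have uB: "?u \<in> ?B" using b assms by (auto simp: min_def max_def)
  have on: "open_nbhd ?V ?E ?u - ?B = {Inl a}"
  proof
    show "open_nbhd ?V ?E ?u - ?B \<subseteq> {Inl a}" by (auto simp: open_nbhd_def)
    show "{Inl a} \<subseteq> open_nbhd ?V ?E ?u - ?B" using b assms
      by (auto simp: open_nbhd_def min_def max_def)
  qed
  have zf: "(force_step ?V ?E)\<^sup>*\<^sup>* ?B ?V"
  proof (rule zf_all[OF kV_finite])
    show "?B \<subseteq> ?V" by blast
    show "\<forall>w\<in>?V - ?B. \<exists>u\<in>?B. open_nbhd ?V ?E u - ?B = {w}"
      using uB on by auto
  qed
  have "(force_step ?V ?E)\<^sup>*\<^sup>* (closed_nbhd_set ?V ?E (AA r a)) ?V"
    using zf_mono[OF zf sub cn_sub[OF AA_sub]] .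
  then show ?thesis using AA_sub cn_sub[OF AA_sub]
    unfolding power_dominating_set_def zero_forcing_set_def by blast
qed




definition tw :: "nat \<Rightarrow> nat \<Rightarrow> nat \<Rightarrow> (nat + nat \<times> nat \<times> nat) set" where
  "tw q a b = (\<lambda>t. Inr (min a b, max a b, t)) ` {..<q}"

lemma card_tw: "card (tw q a b) = q"
  unfolding tw_def by (subst card_image) (auto simp: inj_on_def)

lemma two_elems: "2 \<le> card A \<Longrightarrow> \<exists>x y. x \<in> A \<and> y \<in> A \<and> x \<noteq> y"
proof -
  assume "2 \<le> card A"
  then have "\<not> card A \<le> 1" by simp
  then show ?thesis using card_le_Suc0_iff_eq[of A]
    by (metis One_nat_def card.infinite zero_le)
qed

lemma twin_lemma:
  assumes pds: "power_dominating_set (kqr_V r q) (kqr_E r q) S"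
    and a: "a < r" "Inl a \<notin> S" and b: "b < r" "Inl b \<notin> S" "a \<noteq> b"
  shows "card (tw q a b - S) \<le> 1"
proof (rule ccontr)
  let ?i = "min a b" and ?j = "max a b"
  assume "\<not> ?thesis"
  then have "2 \<le> card (tw q a b - S)" by simp
  then obtain x y where "x \<in> tw q a b - S" "y \<in> tw q a b - S" "x \<noteq> y"
    using two_elems by blast
  then obtain t1 t2 where t: "t1<q" "t2<q" "t1\<noteq>t2" "Inr(?i,?j,t1) \<notin> S" "Inr(?i,?j,t2) \<notin> S"
    by (auto simp: tw_def)
  let ?F = "{Inr(?i,?j,t1), Inr(?i,?j,t2)} :: (nat + nat \<times> nat \<times> nat) set"
  have ij: "?i < ?j" "?j < r" using a b by auto
  have nS: "Inl ?i \<notin> S" "Inl ?j \<notin> S" using a b by (auto simp: min_def max_def)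
  have "\<not> power_dominating_set (kqr_V r q) (kqr_E r q) S"
  proof (rule pds_fort[of ?F])
    show "?F \<subseteq> kqr_V r q" using ij t by simp
    show "?F \<noteq> {}" by simp
    show "closed_nbhd_set (kqr_V r q) (kqr_E r q) S \<inter> ?F = {}"
      using t nS by (auto simp: closed_nbhd_set_def)
    show "\<exists>w'\<in>?F. w' \<noteq> w \<and> kqr_E r q u w'"
      if "u \<notin> ?F" "w \<in> ?F" "kqr_E r q u w" for u w
      using that t ij by auto
  qed
  with pds show False by contradiction
qed

lemma missing_le1:
  assumes r: "r \<ge> 1" and q: "q \<ge> 4"
    and pds: "power_dominating_set (kqr_V r q) (kqr_E r q) S" and cS: "card S \<le> r"
  shows "\<exists>a<r. AA r a \<subseteq> S"
proof -
  define M where "M = {c. c<r \<and> Inl c \<notin> S}"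
  have MS: "M \<subseteq> {..<r}" by (auto simp: M_def)
  have fM: "finite M" using MS finite_subset by blast
  have SV: "S \<subseteq> kqr_V r q" using pds by (simp add: power_dominating_set_def)
  have fS: "finite S" using finite_subset[OF SV kV_finite] .
  show ?thesis
  proof (cases "card M \<le> 1")
    case True
    obtain a where a: "a < r" "M \<subseteq> {a}"
    proof (cases "M = {}")
      case True then show ?thesis using that r by auto
    next
      case False
      then have "card M = 1" using \<open>card M \<le> 1\<close> fM by (simp add: Suc_leI le_antisym card_gt_0_iff)
      then obtain a where "M = {a}" by (meson card_1_singletonE)
      then show ?thesis using that MS by auto
    qed
    then show ?thesis unfolding AA_def M_def by auto
  next
    case False
    then have cM: "card M \<ge> 2" by simp
    then have "M \<noteq> {}" by auto
    then obtain a0 where a0: "a0 \<in> M" by blast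
    define I where "I = M - {a0}"
    define P where "P c = tw q a0 c \<inter> S" for c
    have fI: "finite I" using fM by (simp add: I_def)
    have cI: "card I = card M - 1" using a0 fM by (simp add: I_def)
    have cP: "3 \<le> card (P c)" if c: "c \<in> I" for c
    proof -
      have "card (tw q a0 c - S) \<le> 1"
        using twin_lemma[OF pds] a0 c by (auto simp: I_def M_def)
      moreover have "card (tw q a0 c - S) = q - card (P c)"
        using card_Diff_subset_Int[of "tw q a0 c" S] fS card_tw[of q a0 c] by (simp add: P_def)
      ultimately show ?thesis using q by linarith
    qed
    have disj: "\<forall>c\<in>I. \<forall>c'\<in>I. c \<noteq> c' \<longrightarrow> P c \<inter> P c' = {}"
    proof (intro ballI impI)
      fix c c' assume c: "c \<in> I" "c' \<in> I" "c \<noteq> c'"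
      then have "c \<noteq> a0" "c' \<noteq> a0" by (auto simp: I_def)
      then have "tw q a0 c \<inter> tw q a0 c' = {}" using c(3)
        by (auto simp: tw_def min_def max_def split: if_splits)
      then show "P c \<inter> P c' = {}" by (auto simp: P_def)
    qed
    have fP: "\<forall>c\<in>I. finite (P c)" using fS by (simp add: P_def)
    have cU: "card (\<Union>c\<in>I. P c) = (\<Sum>c\<in>I. card (P c))"
      using card_UN_disjoint[OF fI fP disj] .
    have "of_nat (card I) * 3 \<le> (\<Sum>c\<in>I. card (P c))"
      using sum_bounded_below[of I 3 "\<lambda>c. card (P c)"] cP by blast
    then have sU: "card I * 3 \<le> card (\<Union>c\<in>I. P c)" using cU by simp
    let ?L = "Inl ` ({..<r} - M) :: (nat + nat \<times> nat \<times> nat) set"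
    have cL: "card ?L = r - card M"
      by (subst card_image) (auto simp: card_Diff_subset[OF fM MS])
    have LS: "?L \<subseteq> S" by (auto simp: M_def)
    have US: "(\<Union>c\<in>I. P c) \<subseteq> S" by (auto simp: P_def)
    have LU: "?L \<inter> (\<Union>c\<in>I. P c) = {}" by (auto simp: P_def tw_def)
    have "card (?L \<union> (\<Union>c\<in>I. P c)) = card ?L + card (\<Union>c\<in>I. P c)"
      by (rule card_Un_disjoint) (use LU finite_subset[OF LS fS] finite_subset[OF US fS] in auto)
    moreover have "card (?L \<union> (\<Union>c\<in>I. P c)) \<le> card S"
      using LS US fS by (intro card_mono) auto
    moreover have "card M \<le> r" using card_mono[OF _ MS] by simp
    ultimately show ?thesis using cL sU cI cM cS by linarith
  qed
qed




definition Sst :: "nat \<Rightarrow> nat \<Rightarrow> (nat + nat \<times> nat \<times> nat) set" where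
  "Sst r q = {Inr (i,j,t) | i j t. i<j \<and> j<r \<and> t<q \<and> (i\<noteq>0 \<or> t\<noteq>0)}"

lemma Sst_simps[simp]:
  "Inl c \<notin> Sst r q"
  "Inr (i,j,t) \<in> Sst r q \<longleftrightarrow> i<j \<and> j<r \<and> t<q \<and> (i\<noteq>0 \<or> t\<noteq>0)"
  by (auto simp: Sst_def)

lemma Sst_sub: "Sst r q \<subseteq> kqr_V r q" by (auto simp: Sst_def)

lemma Sst_Inr: "x \<in> Sst r q \<Longrightarrow> \<exists>i j t. x = Inr (i,j,t) \<and> i<j \<and> j<r \<and> t<q \<and> (i\<noteq>0 \<or> t\<noteq>0)"
  by (auto simp: Sst_def)

lemma Sst_pds:
  assumes "2 \<le> r" "2 \<le> q"
  shows "power_dominating_set (kqr_V r q) (kqr_E r q) (Sst r q)"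
proof -
  let ?V = "kqr_V r q" and ?E = "kqr_E r q"
  let ?B = "Sst r q \<union> Inl ` {..<r}"
  have sub: "?B \<subseteq> closed_nbhd_set ?V ?E (Sst r q)"
  proof
    fix x assume x: "x \<in> ?B"
    show "x \<in> closed_nbhd_set ?V ?E (Sst r q)"
    proof (cases "x \<in> Sst r q")
      case True then show ?thesis by (simp add: closed_nbhd_set_def)
    next
      case False
      then obtain c where c: "x = Inl c" "c < r" using x by auto
      show ?thesis
      proof (cases "c = 0")
        case True
        have "Inr (0,1,1) \<in> Sst r q" using assms by simp
        moreover have "?E (Inr (0,1,1)) x" using c True assms by simp
        ultimately have "\<exists>u\<in>Sst r q. ?E u x" by blast
        moreover have "x \<in> ?V" using c by simp
        ultimately show ?thesis unfolding closed_nbhd_set_def by blast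
      next
        case False
        have "Inr (0,c,1) \<in> Sst r q" using assms c False by simp
        moreover have "?E (Inr (0,c,1)) x" using c False assms by simp
        ultimately have "\<exists>u\<in>Sst r q. ?E u x" by blast
        moreover have "x \<in> ?V" using c by simp
        ultimately show ?thesis unfolding closed_nbhd_set_def by blast
      qed
    qed
  qed
  have BV: "?B \<subseteq> ?V" using Sst_sub by auto
  have zf: "(force_step ?V ?E)\<^sup>*\<^sup>* ?B ?V"
  proof (rule zf_all[OF kV_finite BV], rule ballI)
    fix w assume w: "w \<in> ?V - ?B"
    then obtain p where p: "w = Inr p" by (cases w) auto
    then obtain i j t where ijt: "w = Inr (i,j,t)" by (cases p) auto
    then have h: "i = 0" "t = 0" "0 < j" "j < r" using w by auto
    have "open_nbhd ?V ?E (Inl j) - ?B = {w}"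
    proof
      show "open_nbhd ?V ?E (Inl j) - ?B \<subseteq> {w}"
      proof
        fix x assume x: "x \<in> open_nbhd ?V ?E (Inl j) - ?B"
        then obtain p' where p': "x = Inr p'" by (cases x) (auto simp: open_nbhd_def)
        then obtain i' j' t' where x': "x = Inr (i',j',t')" by (cases p') auto
        then show "x \<in> {w}" using x h ijt by (auto simp: open_nbhd_def)
      qed
      show "{w} \<subseteq> open_nbhd ?V ?E (Inl j) - ?B" using w h ijt by (auto simp: open_nbhd_def)
    qed
    moreover have "Inl j \<in> ?B" using h by auto
    ultimately show "\<exists>u\<in>?B. open_nbhd ?V ?E u - ?B = {w}" by blast
  qed
  have "(force_step ?V ?E)\<^sup>*\<^sup>* (closed_nbhd_set ?V ?E (Sst r q)) ?V"
    using zf_mono[OF zf sub cn_sub[OF Sst_sub]] .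
  then show ?thesis using Sst_sub cn_sub[OF Sst_sub]
    unfolding power_dominating_set_def zero_forcing_set_def by blast
qed

lemma cn_Inr:
  assumes "T \<subseteq> Sst r q" "x \<in> closed_nbhd_set (kqr_V r q) (kqr_E r q) T" "x = Inr p"
  shows "x \<in> T"
proof -
  obtain i j t where p: "p = (i,j,t)" by (cases p) auto
  have "\<not> (\<exists>u\<in>T. kqr_E r q u x)"
  proof
    assume "\<exists>u\<in>T. kqr_E r q u x"
    then obtain u where "u \<in> T" "kqr_E r q u x" by blast
    then show False using assms(1,3) p by auto
  qed
  then show ?thesis using assms(2) by (auto simp: closed_nbhd_set_def)
qed

lemma Sst_minimal:
  assumes "2 \<le> r" "2 \<le> q"
  shows "minimal_pds (kqr_V r q) (kqr_E r q) (Sst r q)"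
  unfolding minimal_pds_def
proof (intro conjI allI impI)
  show "power_dominating_set (kqr_V r q) (kqr_E r q) (Sst r q)" using Sst_pds[OF assms] .
  fix T assume T: "T \<subset> Sst r q"
  then obtain x where x: "x \<in> Sst r q" "x \<notin> T" by blast
  then obtain i j t where ijt: "x = Inr (i,j,t)" "i<j" "j<r" "t<q" "i\<noteq>0 \<or> t\<noteq>0"
    using Sst_Inr by blast
  have TS: "T \<subseteq> Sst r q" using T by blast
  show "\<not> power_dominating_set (kqr_V r q) (kqr_E r q) T"
  proof (cases "i = 0")
    case True
    then have t0: "t \<noteq> 0" using ijt by auto
    let ?F = "{Inr (0,j,0), Inr (0,j,t)} :: (nat + nat \<times> nat \<times> nat) set"
    show ?thesis
    proof (rule pds_fort[of ?F])
      show "?F \<subseteq> kqr_V r q" using ijt True by auto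
      show "?F \<noteq> {}" by simp
      have "Inr (0,j,0) \<notin> T" using TS by auto
      moreover have "Inr (0,j,t) \<notin> T" using x ijt True by simp
      ultimately show "closed_nbhd_set (kqr_V r q) (kqr_E r q) T \<inter> ?F = {}"
        using cn_Inr[OF TS] by blast
      show "\<exists>w'\<in>?F. w' \<noteq> w \<and> kqr_E r q u w'"
        if "u \<notin> ?F" "w \<in> ?F" "kqr_E r q u w" for u w
        using that t0 ijt True by auto
    qed
  next
    case False
    let ?F = "{Inr (i,j,t), Inr (0,i,0), Inr (0,j,0)} :: (nat + nat \<times> nat \<times> nat) set"
    show ?thesis
    proof (rule pds_fort[of ?F])
      show "?F \<subseteq> kqr_V r q" using ijt False by auto
      show "?F \<noteq> {}" by simp
      have "Inr (0,j,0) \<notin> T" "Inr (0,i,0) \<notin> T" using TS by auto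
      moreover have "Inr (i,j,t) \<notin> T" using x ijt by simp
      ultimately show "closed_nbhd_set (kqr_V r q) (kqr_E r q) T \<inter> ?F = {}"
        using cn_Inr[OF TS] by blast
      show "\<exists>w'\<in>?F. w' \<noteq> w \<and> kqr_E r q u w'"
        if "u \<notin> ?F" "w \<in> ?F" "kqr_E r q u w" for u w
      proof -
        from that(2) consider "w = Inr (i,j,t)" | "w = Inr (0,i,0)" | "w = Inr (0,j,0)" by blast
        then show ?thesis
        proof cases
          case 1
          then have "u = Inl i \<or> u = Inl j" using that(3) by auto
          then show ?thesis using 1 ijt False by auto
        next
          case 2
          then have "u = Inl 0 \<or> u = Inl i" using that(3) by auto
          then show ?thesis using 2 ijt False by auto
        next
          case 3
          then have "u = Inl 0 \<or> u = Inl j" using that(3) by auto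
          then show ?thesis using 3 ijt False by auto
        qed
      qed
    qed
  qed
qed

lemma card_pairs: "card {(i::nat,j). i<j \<and> j<r} = r*(r-1) div 2"
proof (induction r)
  case 0 then show ?case by simp
next
  case (Suc r)
  have e: "{(i::nat,j). i<j \<and> j<Suc r} = {(i,j). i<j \<and> j<r} \<union> (\<lambda>i. (i,r)) ` {..<r}" by auto
  have f: "finite {(i::nat,j). i<j \<and> j<r}"
    by (rule finite_subset[of _ "{..<r} \<times> {..<r}"]) auto
  have d: "{(i::nat,j). i<j \<and> j<r} \<inter> (\<lambda>i. (i,r)) ` {..<r} = {}" by auto
  have "card {(i::nat,j). i<j \<and> j<Suc r} = r*(r-1) div 2 + r"
    unfolding e using Suc f d by (simp add: card_Un_disjoint card_image inj_on_def)
  also have "\<dots> = Suc r * (Suc r - 1) div 2"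
  proof (cases r)
    case 0 then show ?thesis by simp
  next
    case (Suc m)
    have "Suc r * (Suc r - 1) = r * (r - 1) + 2 * r" using Suc by (simp add: algebra_simps)
    then show ?thesis by simp
  qed
  finally show ?case .
qed

lemma card_Sst:
  assumes "1 \<le> q" "1 \<le> r"
  shows "card (Sst r q) = (r*(r-1) div 2) * q - (r - 1)"
proof -
  let ?P = "{(i::nat,j). i<j \<and> j<r}"
  let ?f = "\<lambda>((i,j),t). Inr (i,j,t) :: nat + nat \<times> nat \<times> nat"
  let ?Tall = "?f ` (?P \<times> {..<q})"
  let ?Rem = "(\<lambda>j. Inr (0,j,0) :: nat + nat \<times> nat \<times> nat) ` {1..<r}"
  have fP: "finite ?P" by (rule finite_subset[of _ "{..<r} \<times> {..<r}"]) auto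
  have cT: "card ?Tall = (r*(r-1) div 2) * q"
    by (subst card_image) (auto simp: inj_on_def card_cartesian_product card_pairs)
  have cR: "card ?Rem = r - 1" by (subst card_image) (auto simp: inj_on_def)
  have RT: "?Rem \<subseteq> ?Tall"
  proof
    fix x assume "x \<in> ?Rem"
    then obtain j where j: "x = Inr (0,j,0)" "1 \<le> j" "j < r" by auto
    then have "((0,j),0) \<in> ?P \<times> {..<q}" using assms by auto
    then show "x \<in> ?Tall" using j by force
  qed
  have e: "Sst r q = ?Tall - ?Rem"
  proof
    show "Sst r q \<subseteq> ?Tall - ?Rem"
    proof
      fix x assume "x \<in> Sst r q"
      then obtain i j t where ijt: "x = Inr (i,j,t)" "i<j" "j<r" "t<q" "i\<noteq>0 \<or> t\<noteq>0"
        using Sst_Inr by blast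
      then have "((i,j),t) \<in> ?P \<times> {..<q}" by auto
      then have "x \<in> ?Tall" using ijt by force
      moreover have "x \<notin> ?Rem" using ijt by auto
      ultimately show "x \<in> ?Tall - ?Rem" by blast
    qed
    show "?Tall - ?Rem \<subseteq> Sst r q"
    proof
      fix x assume x: "x \<in> ?Tall - ?Rem"
      then obtain i j t where ijt: "x = Inr (i,j,t)" "i<j" "j<r" "t<q" by auto
      then have "i \<noteq> 0 \<or> t \<noteq> 0" using x by force
      then show "x \<in> Sst r q" using ijt by simp
    qed
  qed
  have "finite ?Tall" using fP by auto
  then show ?thesis unfolding e using card_Diff_subset[OF _ RT] cT cR
    by (metis finite_subset[OF RT])
qed




lemma card_AA: "a < r \<Longrightarrow> card (AA r a) = r - 1"
  unfolding AA_def by (subst card_image) auto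

lemma tar_adj_ins: "y \<notin> S \<Longrightarrow> tar_adj S (insert y S) \<and> tar_adj (insert y S) S"
proof -
  assume "y \<notin> S"
  then have "(S - insert y S) \<union> (insert y S - S) = {y}" "(insert y S - S) \<union> (S - insert y S) = {y}" by auto
  then show ?thesis unfolding tar_adj_def by simp
qed

lemma pds_ge:
  assumes "r \<ge> 1" "q \<ge> 4" "power_dominating_set (kqr_V r q) (kqr_E r q) S"
  shows "r - 1 \<le> card S"
proof (cases "card S \<le> r")
  case True
  then obtain a where a: "a < r" "AA r a \<subseteq> S" using missing_le1[OF assms] by blast
  have SV: "S \<subseteq> kqr_V r q" using assms(3) by (simp add: power_dominating_set_def)
  have "card (AA r a) \<le> card S" using a finite_subset[OF SV kV_finite] by (intro card_mono) auto
  then show ?thesis using card_AA[OF a(1)] by simp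
next
  case False then show ?thesis by simp
qed

lemma pds_small_eq:
  assumes "r \<ge> 1" "q \<ge> 4" "power_dominating_set (kqr_V r q) (kqr_E r q) S" "card S \<le> r - 1"
  shows "\<exists>a<r. S = AA r a"
proof -
  obtain a where a: "a < r" "AA r a \<subseteq> S" using missing_le1[OF assms(1-3)] assms(4) by force
  have SV: "S \<subseteq> kqr_V r q" using assms(3) by (simp add: power_dominating_set_def)
  have "AA r a = S" using a assms(4) card_AA[OF a(1)] finite_subset[OF SV kV_finite]
    by (intro card_seteq) auto
  then show ?thesis using a by blast
qed

lemma pds_r_form:
  assumes "r \<ge> 1" "q \<ge> 4" "power_dominating_set (kqr_V r q) (kqr_E r q) S" "card S \<le> r"
  shows "\<exists>a<r. S = AA r a \<or> (\<exists>y. y \<notin> AA r a \<and> S = insert y (AA r a))"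
proof -
  obtain a where a: "a < r" "AA r a \<subseteq> S" using missing_le1[OF assms] by blast
  have SV: "S \<subseteq> kqr_V r q" using assms(3) by (simp add: power_dominating_set_def)
  have fS: "finite S" using finite_subset[OF SV kV_finite] .
  show ?thesis
  proof (cases "S = AA r a")
    case True then show ?thesis using a by blast
  next
    case False
    have "card (S - AA r a) = card S - (r - 1)"
      using card_Diff_subset[OF finite_subset[OF a(2) fS] a(2)] card_AA[OF a(1)] by simp
    then have "card (S - AA r a) \<le> 1" using assms(4) by simp
    moreover have "S - AA r a \<noteq> {}" using False a(2) by blast
    ultimately have "card (S - AA r a) = 1" using fS
      by (metis One_nat_def card_0_eq finite_Diff le_antisym less_one not_le)
    then obtain y where y: "S - AA r a = {y}" by (meson card_1_singletonE)
    then have "y \<notin> AA r a" "S = insert y (AA r a)" using a(2) by auto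
    then show ?thesis using a by blast
  qed
qed

theorem proposition3p10:
  fixes r q :: nat
  assumes "r \<ge> 3" and "q \<ge> 4"
  shows "power_domination_number (kqr_V r q) (kqr_E r q) = r - 1
       \<and> int (upper_power_domination_number (kqr_V r q) (kqr_E r q))
           \<ge> int q * (int r * (int r - 1) div 2) - (int r - 1)
       \<and> lower_pd0 (kqr_V r q) (kqr_E r q) = r
       \<and> int (pd0 (kqr_V r q) (kqr_E r q))
           \<ge> int q * (int r * (int r - 1) div 2) - (int r - 1) + 1
       \<and> int q * (int r * (int r - 1) div 2) - (int r - 1) + 1 > int r"
proof -
  let ?V = "kqr_V r q" and ?E = "kqr_E r q"
  have r1: "r \<ge> 1" and r2: "r \<ge> 2" and q2: "q \<ge> 2" and q1: "q \<ge> 1" using assms by auto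
  have fV: "finite ?V" by (rule kV_finite)
  have fPDS: "finite {S. power_dominating_set ?V ?E S}"
    by (rule finite_subset[of _ "Pow ?V"]) (auto simp: power_dominating_set_def fV)
  have A0: "power_dominating_set ?V ?E (AA r 0)" using AA_pds[OF r2 q1] r1 by simp
  have A1: "power_dominating_set ?V ?E (AA r 1)" using AA_pds[OF r2 q1] r2 by simp
  define C where "C = r * (r - 1) div 2"
  have CI: "int C = int r * (int r - 1) div 2"
    unfolding C_def using r1 by (simp add: of_nat_div of_nat_diff)
  have Cr: "r - 1 \<le> C"
  proof -
    have "2 * (r - 1) \<le> r * (r - 1)" using r2 by (intro mult_right_mono) auto
    then have "2 * (r - 1) div 2 \<le> r * (r - 1) div 2" by (rule div_le_mono)
    then show ?thesis unfolding C_def by simp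
  qed
  have CqI: "int q * int C \<ge> 4 * int C" using assms(2) by (intro mult_right_mono) auto
  define N where "N = card (Sst r q)"
  have NC: "N = C * q - (r - 1)" unfolding N_def C_def using card_Sst[OF q1 r1] .
  have Cq: "r - 1 \<le> C * q" using Cr q1 by (metis le_trans mult.right_neutral mult_le_mono2)
  have NI: "int N = int q * (int r * (int r - 1) div 2) - (int r - 1)"
    using NC Cq CI r1 by (simp add: of_nat_diff algebra_simps)
  have "4 * C \<le> C * q" using assms(2) by simp
  then have Nr: "r - 1 \<le> N" using NC Cr by linarith
  have c1: "power_domination_number ?V ?E = r - 1"
    unfolding power_domination_number_def
  proof (rule Min_eqI)
    show "finite (card ` {S. power_dominating_set ?V ?E S})" using fPDS by simp
    show "r - 1 \<le> y" if "y \<in> card ` {S. power_dominating_set ?V ?E S}" for y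
      using that pds_ge[OF r1 assms(2)] by auto
    show "r - 1 \<in> card ` {S. power_dominating_set ?V ?E S}"
      using A0 card_AA[of 0 r] r1 by force
  qed
  have minS: "minimal_pds ?V ?E (Sst r q)" using Sst_minimal[OF r2 q2] .
  have c2: "int (upper_power_domination_number ?V ?E) \<ge> int q * (int r * (int r - 1) div 2) - (int r - 1)"
  proof -
    have "finite {S. minimal_pds ?V ?E S}"
      by (rule finite_subset[of _ "Pow ?V"]) (auto simp: minimal_pds_def power_dominating_set_def fV)
    then have "N \<le> upper_power_domination_number ?V ?E"
      unfolding upper_power_domination_number_def N_def using minS by (intro Max_ge) auto
    then show ?thesis using NI by linarith
  qed
  let ?O = "Inl ` {..<r} :: (nat + nat \<times> nat \<times> nat) set"
  have OA: "?O = insert (Inl a) (AA r a)" if "a < r" for a using that by (auto simp: AA_def)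
  have s1: "AA r 0 \<subseteq> ?O" by (auto simp: AA_def)
  have s2: "?O \<subseteq> ?V" by auto
  have Opds: "power_dominating_set ?V ?E ?O" using pds_mono[OF A0 s1 s2] .
  have cO: "card ?O = r" by (simp add: card_image)
  have conn_r: "tar_connected ?V ?E r"
  proof -
    let ?X = "tar_vertices ?V ?E r"
    let ?R = "\<lambda>a b. a \<in> ?X \<and> b \<in> ?X \<and> tar_adj a b"
    have OX: "?O \<in> ?X" using Opds cO by (simp add: tar_vertices_def)
    have AX: "AA r a \<in> ?X" if "a < r" for a
      using AA_pds[OF r2 q1 that] card_AA[OF that] by (simp add: tar_vertices_def)
    have AO: "?R\<^sup>*\<^sup>* (AA r a) ?O \<and> ?R\<^sup>*\<^sup>* ?O (AA r a)" if a: "a < r" for a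
    proof -
      have "Inl a \<notin> AA r a" by (auto simp: AA_def)
      then have "tar_adj (AA r a) ?O \<and> tar_adj ?O (AA r a)" using OA[OF a] tar_adj_ins by metis
      then show ?thesis using AX[OF a] OX by auto
    qed
    have main: "?R\<^sup>*\<^sup>* x ?O \<and> ?R\<^sup>*\<^sup>* ?O x" if x: "x \<in> ?X" for x
    proof -
      have px: "power_dominating_set ?V ?E x" "card x \<le> r" using x by (auto simp: tar_vertices_def)
      obtain a where a: "a < r" "x = AA r a \<or> (\<exists>y. y \<notin> AA r a \<and> x = insert y (AA r a))"
        using pds_r_form[OF r1 assms(2) px] by blast
      show ?thesis
      proof (cases "x = AA r a")
        case True then show ?thesis using AO[OF a(1)] by simp
      next
        case False
        then obtain y where y: "y \<notin> AA r a" "x = insert y (AA r a)" using a by blast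
        then have "tar_adj x (AA r a) \<and> tar_adj (AA r a) x" using tar_adj_ins by metis
        then have s1: "?R x (AA r a)" "?R (AA r a) x" using x AX[OF a(1)] by auto
        show ?thesis
          using converse_rtranclp_into_rtranclp[of ?R, OF s1(1) conjunct1[OF AO[OF a(1)]]]
            rtranclp.rtrancl_into_rtrancl[of ?R, OF conjunct2[OF AO[OF a(1)]] s1(2)] by blast
      qed
    qed
    show ?thesis unfolding tar_connected_def connected_on_def
    proof (intro conjI ballI)
      show "?X \<noteq> {}" using OX by blast
      fix x y assume "x \<in> ?X" "y \<in> ?X"
      then have "?R\<^sup>*\<^sup>* x ?O" "?R\<^sup>*\<^sup>* ?O y" using main by blast+
      then show "?R\<^sup>*\<^sup>* x y" by (rule rtranclp_trans)
    qed
  qed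
  have nconn: "\<not> tar_connected ?V ?E k" if k: "k < r" for k
  proof
    assume con: "tar_connected ?V ?E k"
    let ?X = "tar_vertices ?V ?E k"
    let ?R = "\<lambda>a b. a \<in> ?X \<and> b \<in> ?X \<and> tar_adj a b"
    show False
    proof (cases "k < r - 1")
      case True
      have "?X = {}" using pds_ge[OF r1 assms(2)] True by (force simp: tar_vertices_def)
      then show False using con by (simp add: tar_connected_def connected_on_def)
    next
      case False
      then have kr: "k = r - 1" using k by simp
      have form: "\<exists>a<r. x = AA r a" if "x \<in> ?X" for x
        using that pds_small_eq[OF r1 assms(2)] kr by (auto simp: tar_vertices_def)
      have noadj: "\<forall>x\<in>?X. \<forall>y\<in>?X. \<not> tar_adj x y"
      proof (intro ballI)
        fix x y assume "x \<in> ?X" "y \<in> ?X"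
        then obtain a b where ab: "a < r" "b < r" "x = AA r a" "y = AA r b" using form by blast
        show "\<not> tar_adj x y"
        proof (cases "a = b")
          case True then show ?thesis using ab by (simp add: tar_adj_def)
        next
          case False
          then have "(x - y) \<union> (y - x) = {Inl b, Inl a}" using ab by (auto simp: AA_def)
          then show ?thesis using False by (simp add: tar_adj_def)
        qed
      qed
      have "AA r 0 \<in> ?X" "AA r 1 \<in> ?X" using A0 A1 card_AA[of 0 r] card_AA[of 1 r] r2 kr
        by (auto simp: tar_vertices_def)
      then have "?R\<^sup>*\<^sup>* (AA r 0) (AA r 1)" using con by (simp add: tar_connected_def connected_on_def)
      then have "AA r 0 = AA r 1" by (rule rt_noadj) (rule noadj)
      moreover have "Inl 1 \<in> AA r 0" "Inl 1 \<notin> AA r 1" using r2 by (auto simp: AA_def)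
      ultimately show False by simp
    qed
  qed
  have c3: "lower_pd0 ?V ?E = r"
    unfolding lower_pd0_def
  proof (rule Least_equality)
    show "tar_connected ?V ?E r" by (rule conn_r)
    show "r \<le> k" if "tar_connected ?V ?E k" for k using that nconn by (meson not_le)
  qed
  have c4: "int (pd0 ?V ?E) \<ge> int q * (int r * (int r - 1) div 2) - (int r - 1) + 1"
  proof -
    let ?P = "\<lambda>k0. \<forall>k\<ge>k0. tar_connected ?V ?E k"
    have ex: "?P (card ?V)" using big_conn[OF fV] by blast
    have PL: "?P (LEAST k0. ?P k0)" using LeastI[of ?P, OF ex] .
    have cA: "card (AA r 0) \<le> N" using card_AA[of 0 r] r1 Nr by simp
    have "Inl 1 \<in> AA r 0" using r2 by (auto simp: AA_def)
    then have ne: "AA r 0 \<noteq> Sst r q" by auto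
    have ndis: "\<not> tar_connected ?V ?E N"
      using isolated_disconn[OF fV minS N_def[symmetric] A0 cA ne] .
  have "N < (LEAST k0. ?P k0)"
    proof (rule ccontr)
      assume "\<not> ?thesis"
      then show False using PL ndis by (meson not_le)
    qed
    then show ?thesis using NI unfolding pd0_def by linarith
  qed
  have c5: "int q * (int r * (int r - 1) div 2) - (int r - 1) + 1 > int r"
  proof -
    have "int C \<ge> int r - 1" using Cr r1 by linarith
    then show ?thesis unfolding CI[symmetric] using CqI r2 by linarith
  qed
  show ?thesis using c1 c2 c3 c4 c5 by blast
qed


end
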